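(* Let $\mathbf G$ be a group, let $G_{<\infty}$ be the set of its elements of finite order, and let $\Phi$ be the finite-order component of $\mathcal G(\mathbf G)$. Assume $\lvert\mathrm{Cen}(\Phi)\rvert=1$. Let $x\in G_{<\infty}$ be such that the $\equiv$-class $[x]_\equiv$ of $x$ in $\Phi$ is not a single $\approx$-class (i.e. $[x]_\equiv$ is a complex or infinitely complex $\equiv$-class). Then the closed neighborhood of $x$ in $\mathcal G(\mathbf G)$ equals the closed neighborhood of $x$ in $\mathcal G_e(\mathbf G)$.
   Context: All graphs are simple. For a group $\mathbf G$: the power graph $\mathcal G(\mathbf G)$ has vertex set $G$, and distinct $x,y$ are adjacent iff $y=x^n$ or $x=y^n$ for some $n\in\mathbb Z\setminus\{0\}$ (so the identity is not adjacent to elements of infinite order). The enhanced power graph $\mathcal G_e(\mathbf G)$ has vertex set $G$, and distinct $x,y$ are adjacent iff there are $z\in G$ and $n,m\in\mathbb Z$ with $x=z^n$, $y=z^m$ (equivalently $\langle x,y\rangle$ is cyclic). $G_{<\infty}$ denotes the set of elements of finite order; it induces a connected component of $\mathcal G(\mathbf G)$, called the finite-order component $\Phi$. The center of $\Phi$ is $\mathrm{Cen}(\Phi)=\{x\in G_{<\infty}: x \text{ is adjacent in } \mathcal G(\mathbf G) \text{ to all } y\in G_{<\infty}\setminus\{x\}\}$. The closed neighborhood of a vertex $x$ is $\overline N(x)=\{x\}\cup\{y: y\sim x\}$. For $x,y\in G_{<\infty}$, $x\equiv y$ means $x,y$ have the same closed neighborhood in $\Phi$; $x\approx y$ means $\langle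 x\rangle=\langle y\rangle$. Each $\equiv$-class is a union of $\approx$-classes. (Under $\lvert\mathrm{Cen}(\Phi)\rvert=1$, a $\equiv$-class that is not a single $\approx$-class is either complex, i.e. of the form $\{g\in\langle y\rangle: o(g)\ge p^s\}$ for a prime $p$, an element $y$ of order $p^r$ and $r>s>0$, or infinitely complex, i.e. $\bigcup_{k\ge s}[x_k]_\approx$ with $o(x_k)=p^k$ and $x_k\in\langle x_{k+1}\rangle$ for all $k\ge s$.) *)

theory Defs
  imports "HOL-Algebra.Algebra"
begin

definition pow_adj :: "('a, 'b) monoid_scheme \<Rightarrow> 'a \<Rightarrow> 'a \<Rightarrow> bool" where
  "pow_adj G x y \<longleftrightarrow> x \<in> carrier G \<and> y \<in> carrier G \<and> x \<noteq> y \<and>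
     ((\<exists>n::int. n \<noteq> 0 \<and> y = x [^]\<^bsub>G\<^esub> n) \<or> (\<exists>n::int. n \<noteq> 0 \<and> x = y [^]\<^bsub>G\<^esub> n))"

text \<open>Adjacency in the enhanced power graph.\<close>
definition epow_adj :: "('a, 'b) monoid_scheme \<Rightarrow> 'a \<Rightarrow> 'a \<Rightarrow> bool" where
  "epow_adj G x y \<longleftrightarrow> x \<in> carrier G \<and> y \<in> carrier G \<and> x \<noteq> y \<and>
     (\<exists>z\<in>carrier G. \<exists>(n::int) (m::int). x = z [^]\<^bsub>G\<^esub> n \<and> y = z [^]\<^bsub>G\<^esub> m)"

definition fin_ord :: "('a, 'b) monoid_scheme \<Rightarrow> 'a set" where
  "fin_ord G = {x \<in> carrier G. \<exists>n::nat. n > 0 \<and> x [^]\<^bsub>G\<^esub> n = \<one>\<^bsub>G\<^esub>}"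

definition fin_cen :: "('a, 'b) monoid_scheme \<Rightarrow> 'a set" where
  "fin_cen G = {x \<in> fin_ord G. \<forall>y \<in> fin_ord G - {x}. pow_adj G x y}"

definition pow_cnbhd :: "('a, 'b) monoid_scheme \<Rightarrow> 'a \<Rightarrow> 'a set" where
  "pow_cnbhd G x = {x} \<union> {y. pow_adj G x y}"

definition fin_cnbhd :: "('a, 'b) monoid_scheme \<Rightarrow> 'a \<Rightarrow> 'a set" where
  "fin_cnbhd G x = {x} \<union> {y \<in> fin_ord G. pow_adj G x y}"

definition epow_cnbhd :: "('a, 'b) monoid_scheme \<Rightarrow> 'a \<Rightarrow> 'a set" where
  "epow_cnbhd G x = {x} \<union> {y. epow_adj G x y}"

text \<open>The \<equiv>-class (same closed neighbourhood in the finite-order component)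
  and the \<approx>-class (same cyclic subgroup).\<close>
definition equiv_class :: "('a, 'b) monoid_scheme \<Rightarrow> 'a \<Rightarrow> 'a set" where
  "equiv_class G x = {y \<in> fin_ord G. fin_cnbhd G y = fin_cnbhd G x}"

definition approx_class :: "('a, 'b) monoid_scheme \<Rightarrow> 'a \<Rightarrow> 'a set" where
  "approx_class G x = {y \<in> fin_ord G. generate G {y} = generate G {x}}"

end

theory Submission
  imports Defs
begin
lemma K: fixes U Y B :: int
  assumes "U dvd lcm Y B" "gcd U B dvd Y" "Y dvd U" "Y > 0" "B > 0"
  shows "U dvd Y"
proof -
  obtain t where t: "U = Y * t" using assms(3) by blast
  have "lcm Y B * gcd Y B = Y * B" using assms(4,5) by simp
  then have "Y * (t * gcd Y B) dvd Y * B" using assms(1) t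
    by (metis mult.assoc mult_dvd_mono dvd_refl)
  then have h1: "t * gcd Y B dvd B" using assms(4) by simp
  have h2: "t * gcd Y B dvd U" unfolding t by (simp add: mult.commute mult_dvd_mono)
  have "t * gcd Y B dvd gcd U B" using h1 h2 by simp
  then have "t * gcd Y B dvd Y" using assms(2) by (rule dvd_trans)
  then have "t * gcd Y B dvd gcd Y B" using h1 by simp
  then have "t * gcd Y B dvd 1 * gcd Y B" by simp
  then have "t dvd 1" using assms(4) by (subst (asm) dvd_mult_cancel_right) auto
  then show ?thesis using t by simp
qed

lemma core: fixes A B C N :: int
  assumes pos: "A > 0" "B > 0" "C > 0" and dv: "A dvd N" "B dvd N" "C dvd N"
    and ne: "A \<noteq> C" and cmp: "A dvd C \<or> C dvd A"
    and E: "\<And>E. E dvd N \<Longrightarrow> E > 0 \<Longrightarrow> ((E dvd A \<or> A dvd E) \<longleftrightarrow> (E dvd C \<or> C dvd E))"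
  shows "A dvd B \<or> B dvd A"
proof (rule ccontr)
  assume nc: "\<not> (A dvd B \<or> B dvd A)"
  have gpos: "gcd C B > 0" "gcd A B > 0" using pos by auto
  have lpos: "lcm A B > 0" "lcm C B > 0" using pos by (auto simp: lcm_pos_int)
  have gd: "gcd C B dvd N" "gcd A B dvd N" by (rule dvd_trans[OF gcd_dvd2 dv(2)])+
  have ld: "lcm A B dvd N" "lcm C B dvd N" by (rule lcm_least, (simp add: dv)+)+
  show False
  proof (cases "A dvd C")
    case True
    have "gcd C B dvd C" by simp
    then have "gcd C B dvd A \<or> A dvd gcd C B" using E[OF gd(1) gpos(1)] by blast
    moreover have "\<not> A dvd gcd C B" using nc dvd_trans[OF _ gcd_dvd2, of A C B] by blast
    ultimately have e1: "gcd C B dvd A" by blast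
    have "\<not> lcm A B dvd C"
    proof
      assume "lcm A B dvd C"
      then have "B dvd C" by (rule dvd_trans[OF dvd_lcm2])
      then have "B dvd gcd C B" by simp
      then have "B dvd A" using e1 by (rule dvd_trans)
      then show False using nc by blast
    qed
    then have e2: "C dvd lcm A B" using E[OF ld(1) lpos(1)] by blast
    have "C dvd A" using e2 e1 True pos(1) pos(2) by (rule K)
    then have "C = A" using True pos by (intro zdvd_antisym_nonneg) auto
    then show False using ne by simp
  next
    case False
    then have CA: "C dvd A" using cmp by auto
    have "\<not> lcm C B dvd A" using nc dvd_trans[OF dvd_lcm2[of B C] , of A] by blast
    then have e2: "A dvd lcm C B" using E[OF ld(2) lpos(2)] by blast
    have "\<not> C dvd gcd A B"
    proof
      assume "C dvd gcd A B"
      then have "C dvd B" by (rule dvd_trans[OF _ gcd_dvd2])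
      then have "lcm C B dvd B" by (simp add: lcm_least)
      then have "A dvd B" using e2 by (meson dvd_trans)
      then show False using nc by blast
    qed
    then have e1: "gcd A B dvd C" using E[OF gd(2) gpos(2)] by blast
    have "A dvd C" using e2 e1 CA pos(3) pos(2) by (rule K)
    then show False using False by simp
  qed
qed

definition ing :: "('a, 'b) monoid_scheme \<Rightarrow> 'a \<Rightarrow> 'a \<Rightarrow> bool" where
  "ing G u v \<longleftrightarrow> (\<exists>n::int. u = v [^]\<^bsub>G\<^esub> n)"

context group begin

lemma fo_carrier: "v \<in> fin_ord G \<Longrightarrow> v \<in> carrier G"
  by (simp add: fin_ord_def)

lemma fo_ord: assumes "v \<in> fin_ord G" shows "ord v > 0"
proof -
  obtain n :: nat where n: "n > 0" "v [^] n = \<one>" using assms by (auto simp: fin_ord_def)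
  have "ord v dvd n" using n(2) pow_eq_id[OF fo_carrier[OF assms]] by simp
  then show ?thesis using n(1) by (cases "ord v") auto
qed

lemma fo_intro: "v \<in> carrier G \<Longrightarrow> ord v > 0 \<Longrightarrow> v \<in> fin_ord G"
  unfolding fin_ord_def using pow_ord_eq_1 by blast

lemma ing_refl: "v \<in> carrier G \<Longrightarrow> ing G v v"
  unfolding ing_def by (rule exI[of _ 1]) simp

lemma ing_one: "v \<in> carrier G \<Longrightarrow> ing G \<one> v"
  unfolding ing_def by (rule exI[of _ 0]) simp

lemma ing_carrier: "v \<in> carrier G \<Longrightarrow> ing G u v \<Longrightarrow> u \<in> carrier G"
  unfolding ing_def by auto

lemma ing_trans: assumes "w \<in> carrier G" "ing G u v" "ing G v w" shows "ing G u w"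
proof -
  obtain a :: int where a: "v = w [^] a" using assms(3) by (auto simp: ing_def)
  obtain b :: int where b: "u = v [^] b" using assms(2) by (auto simp: ing_def)
  have "u = w [^] (a * b)" using a b assms(1) by (simp add: int_pow_pow)
  then show ?thesis by (auto simp: ing_def)
qed

lemma ing_fin: assumes "v \<in> fin_ord G" "ing G u v" shows "u \<in> fin_ord G"
proof -
  have vc: "v \<in> carrier G" using assms(1) by (rule fo_carrier)
  obtain n :: int where n: "u = v [^] n" using assms(2) by (auto simp: ing_def)
  have uc: "u \<in> carrier G" using n vc by simp
  have "u [^] int (ord v) = v [^] (n * int (ord v))" using n vc by (simp add: int_pow_pow)
  also have "\<dots> = \<one>" using vc by (simp add: int_pow_eq_id)
  finally have "u [^] (ord v) = \<one>" by (simp add: int_pow_int)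
  then show ?thesis using fo_ord[OF assms(1)] uc unfolding fin_ord_def by blast
qed

lemma ing_nz: assumes "v \<in> fin_ord G" "ing G u v" shows "\<exists>n::int. n \<noteq> 0 \<and> u = v [^] n"
proof -
  have vc: "v \<in> carrier G" using assms(1) by (rule fo_carrier)
  obtain n :: int where n: "u = v [^] n" using assms(2) by (auto simp: ing_def)
  show ?thesis
  proof (cases "n = 0")
    case True
    have "v [^] int (ord v) = \<one>" using vc by (simp add: int_pow_eq_id)
    then show ?thesis using True n fo_ord[OF assms(1)]
      by (intro exI[of _ "int (ord v)"]) auto
  next
    case False then show ?thesis using n by blast
  qed
qed

lemma pow_adj_iff: assumes "u \<in> fin_ord G" "v \<in> fin_ord G"
  shows "pow_adj G v u \<longleftrightarrow> v \<noteq> u \<and> (ing G u v \<or> ing G v u)"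
proof -
  have "ing G u v \<longleftrightarrow> (\<exists>n::int. n \<noteq> 0 \<and> u = v [^] n)"
    using ing_nz[OF assms(2)] by (auto simp: ing_def)
  moreover have "ing G v u \<longleftrightarrow> (\<exists>n::int. n \<noteq> 0 \<and> v = u [^] n)"
    using ing_nz[OF assms(1)] by (auto simp: ing_def)
  ultimately show ?thesis using fo_carrier[OF assms(1)] fo_carrier[OF assms(2)]
    unfolding pow_adj_def by blast
qed

lemma cnbhd_iff: assumes "u \<in> fin_ord G" "v \<in> fin_ord G"
  shows "u \<in> fin_cnbhd G v \<longleftrightarrow> ing G u v \<or> ing G v u"
  using pow_adj_iff[OF assms] assms ing_refl[OF fo_carrier[OF assms(2)]]
  unfolding fin_cnbhd_def by auto

lemma cnbhd_sub: "v \<in> fin_ord G \<Longrightarrow> fin_cnbhd G v \<subseteq> fin_ord G"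
  unfolding fin_cnbhd_def by auto

lemma cyc: assumes "z \<in> carrier G" "ord z > 0"
  shows "ing G (z [^] (i::int)) (z [^] (j::int)) \<longleftrightarrow> gcd j (int (ord z)) dvd i"
proof -
  let ?N = "int (ord z)"
  have "ing G (z [^] i) (z [^] j) \<longleftrightarrow> (\<exists>k::int. z [^] i = z [^] (j * k))"
    using assms(1) by (simp add: ing_def int_pow_pow)
  also have "\<dots> \<longleftrightarrow> (\<exists>k::int. ?N dvd j * k - i)"
    using int_pow_eq[OF assms(1)] by simp
  also have "\<dots> \<longleftrightarrow> gcd j ?N dvd i"
  proof
    assume "\<exists>k. ?N dvd j * k - i"
    then obtain k where k: "?N dvd j * k - i" by blast
    have "gcd j ?N dvd j * k - i" using k by (meson dvd_trans gcd_dvd2)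
    moreover have "gcd j ?N dvd j * k" by simp
    ultimately have "gcd j ?N dvd j * k - (j * k - i)" by (rule dvd_diff[rotated])
    then show "gcd j ?N dvd i" by simp
  next
    assume "gcd j ?N dvd i"
    then obtain q where q: "i = gcd j ?N * q" by blast
    obtain u v where uv: "u * j + v * ?N = gcd j ?N" using bezout_int by blast
    have "j * (u * q) - i = ?N * (- v * q)" unfolding q uv[symmetric] by (simp add: algebra_simps)
    then show "\<exists>k. ?N dvd j * k - i" by (intro exI[of _ "u * q"]) simp
  qed
  finally show ?thesis .
qed

lemma cmp_iff: assumes "z \<in> carrier G" "ord z > 0"
  shows "(ing G (z [^] (e::int)) (z [^] (a::int)) \<or> ing G (z [^] a) (z [^] e)) \<longleftrightarrow>
     (gcd a (int (ord z)) dvd gcd e (int (ord z)) \<or> gcd e (int (ord z)) dvd gcd a (int (ord z)))"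
  using cyc[OF assms] by simp

end

lemma (in group) main_lemma:
  assumes "True"
    and "card (fin_cen G) = 1"
    and "x \<in> fin_ord G"
    and "equiv_class G x \<noteq> approx_class G x"
  shows "pow_cnbhd G x = epow_cnbhd G x"
proof -
  have xf: "x \<in> fin_ord G" by fact
  have xc: "x \<in> carrier G" using xf by (rule fo_carrier)
  have one_fin: "\<one> \<in> fin_ord G" unfolding fin_ord_def by (intro CollectI conjI exI[of _ "1::nat"]) auto
  have one_cen: "\<one> \<in> fin_cen G"
    unfolding fin_cen_def using one_fin
    by (auto simp: pow_adj_iff ing_one fo_carrier)
  obtain c0 where "fin_cen G = {c0}" using assms(2) card_1_singletonE by blast
  with one_cen have cen: "fin_cen G = {\<one>}" by simp
  have cen_mem: "v = \<one>" if "v \<in> fin_ord G" "\<forall>u\<in>fin_ord G. ing G u v \<or> ing G v u" for v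
  proof -
    have "v \<in> fin_cen G" unfolding fin_cen_def using that by (auto simp: pow_adj_iff)
    then show ?thesis using cen by simp
  qed
  have gen_sub: "generate G {u} \<subseteq> generate G {v}" if th: "u \<in> carrier G" "v \<in> carrier G" "ing G u v" for u v
  proof
    fix g assume "g \<in> generate G {u}"
    then obtain k :: int where k: "g = u [^] k" using generate_pow[OF th(1)] by blast
    obtain n :: int where n: "u = v [^] n" using th(3) by (auto simp: ing_def)
    have "g = v [^] (n * k)" using k n th(2) by (simp add: int_pow_pow)
    then show "g \<in> generate G {v}" using generate_pow[OF th(2)] by blast
  qed
  have gen_ing: "ing G u v" if "u \<in> carrier G" "v \<in> carrier G" "generate G {u} \<subseteq> generate G {v}" for u v
  proof -
    have "u \<in> generate G {u}" using that(1) by (simp add: generate.incl)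
    then have "u \<in> generate G {v}" using that(3) by blast
    then show ?thesis using generate_pow[OF that(2)] by (auto simp: ing_def)
  qed
  have appr: "approx_class G x \<subseteq> equiv_class G x"
  proof
    fix y assume "y \<in> approx_class G x"
    then have yf: "y \<in> fin_ord G" and g: "generate G {y} = generate G {x}" by (auto simp: approx_class_def)
    have yc: "y \<in> carrier G" using yf by (rule fo_carrier)
    have yx: "ing G y x" and xy: "ing G x y" using gen_ing[OF yc xc] gen_ing[OF xc yc] g by auto
    have "fin_cnbhd G y = fin_cnbhd G x"
    proof (rule Set.set_eqI)
      fix u
      show "u \<in> fin_cnbhd G y \<longleftrightarrow> u \<in> fin_cnbhd G x"
      proof (cases "u \<in> fin_ord G")
        case True
        have uc: "u \<in> carrier G" using True by (rule fo_carrier)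
        show ?thesis unfolding cnbhd_iff[OF True yf] cnbhd_iff[OF True xf]
          using ing_trans[OF xc _ yx] ing_trans[OF yc _ xy] ing_trans[OF uc yx] ing_trans[OF uc xy] by blast
      next
        case False then show ?thesis using cnbhd_sub[OF yf] cnbhd_sub[OF xf] by blast
      qed
    qed
    then show "y \<in> equiv_class G x" using yf by (simp add: equiv_class_def)
  qed
  obtain y where y: "y \<in> equiv_class G x" "y \<notin> approx_class G x" using assms(4) appr by blast
  have yf: "y \<in> fin_ord G" and nb: "fin_cnbhd G y = fin_cnbhd G x" using y(1) by (auto simp: equiv_class_def)
  have yc: "y \<in> carrier G" using yf by (rule fo_carrier)
  have notboth: "\<not> (ing G y x \<and> ing G x y)"
  proof
    assume "ing G y x \<and> ing G x y"
    then have "generate G {y} = generate G {x}" using gen_sub[OF yc xc] gen_sub[OF xc yc] by blast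
    then show False using y(2) yf by (simp add: approx_class_def)
  qed
  have Eq: "(ing G u x \<or> ing G x u) \<longleftrightarrow> (ing G u y \<or> ing G y u)" if "u \<in> fin_ord G" for u
    using cnbhd_iff[OF that xf] cnbhd_iff[OF that yf] nb by simp
  have yx: "ing G y x \<or> ing G x y" using Eq[OF yf] ing_refl[OF yc] by blast
  have xne1: "x \<noteq> \<one>"
  proof
    assume x1: "x = \<one>"
    have "\<forall>u\<in>fin_ord G. ing G u y \<or> ing G y u" using Eq x1 ing_one fo_carrier by blast
    then have "y = \<one>" using cen_mem yf by blast
    then show False using notboth x1 ing_refl[OF xc] by simp
  qed
  have main: "pow_adj G x w \<longleftrightarrow> epow_adj G x w" for w
  proof
    assume "pow_adj G x w"
    then have wc: "w \<in> carrier G" and ne: "x \<noteq> w" and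
      h: "(\<exists>n::int. n \<noteq> 0 \<and> w = x [^] n) \<or> (\<exists>n::int. n \<noteq> 0 \<and> x = w [^] n)"
      by (auto simp: pow_adj_def)
    from h show "epow_adj G x w"
    proof
      assume "\<exists>n::int. n \<noteq> 0 \<and> w = x [^] n"
      then obtain n :: int where "w = x [^] n" by blast
      moreover have "x = x [^] (1::int)" using xc by simp
      ultimately show ?thesis using xc wc ne unfolding epow_adj_def by blast
    next
      assume "\<exists>n::int. n \<noteq> 0 \<and> x = w [^] n"
      then obtain n :: int where "x = w [^] n" by blast
      moreover have "w = w [^] (1::int)" using wc by simp
      ultimately show ?thesis using xc wc ne unfolding epow_adj_def by blast
    qed
  next
    assume "epow_adj G x w"
    then obtain z n m where wc: "w \<in> carrier G" and ne: "x \<noteq> w" and zc: "z \<in> carrier G"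
      and xz: "x = z [^] (n::int)" and wz: "w = z [^] (m::int)"
      unfolding epow_adj_def by blast
    have nz: "n \<noteq> 0" using xz xne1 by auto
    have "z [^] (n * int (ord x)) = x [^] int (ord x)" using xz zc by (simp add: int_pow_pow)
    also have "\<dots> = \<one>" using xc by (simp add: int_pow_eq_id)
    finally have "int (ord z) dvd n * int (ord x)" using int_pow_eq_id[OF zc] by simp
    moreover have "n * int (ord x) \<noteq> 0" using nz fo_ord[OF xf] by simp
    ultimately have ordz: "ord z > 0" by (cases "ord z") auto
    have zf: "z \<in> fin_ord G" using zc ordz by (rule fo_intro)
    have wzi: "ing G w z" using wz by (auto simp: ing_def)
    have xzi: "ing G x z" using xz by (auto simp: ing_def)
    have wf: "w \<in> fin_ord G" using zf wzi by (rule ing_fin)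
    have goal: "ing G w x \<or> ing G x w"
    proof -
      have "ing G z y \<or> ing G y z" using Eq[OF zf] xzi by blast
      then show ?thesis
      proof
        assume "ing G z y"
        then have "ing G w y" using ing_trans[OF yc wzi] by blast
        then show ?thesis using Eq[OF wf] by blast
      next
        assume "ing G y z"
        then obtain c :: int where yz: "y = z [^] c" by (auto simp: ing_def)
        define N where "N = int (ord z)"
        define A where "A = gcd n N"
        define B where "B = gcd m N"
        define C where "C = gcd c N"
        have Npos: "N > 0" using ordz by (simp add: N_def)
        have pos: "A > 0" "B > 0" "C > 0" using Npos by (auto simp: A_def B_def C_def)
        have dv: "A dvd N" "B dvd N" "C dvd N" by (simp_all add: A_def B_def C_def)
        have CI: "(ing G (z [^] e) (z [^] a) \<or> ing G (z [^] a) (z [^] e)) \<longleftrightarrow>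
           (gcd a N dvd gcd e N \<or> gcd e N dvd gcd a N)" for e a :: int
          using cmp_iff[OF zc ordz] by (simp add: N_def)
        have gE: "gcd E N = E" if "E dvd N" "E > 0" for E :: int
          using that gcd_proj1_iff[of E N] by simp
        have cmpAC: "A dvd C \<or> C dvd A" using CI[of c n] yx xz yz by (simp add: A_def C_def)
        have neAC: "A \<noteq> C"
        proof
          assume AC: "A = C"
          have "ing G y x" using cyc[OF zc ordz, of c n] xz yz AC gcd_dvd1[of c "int (ord z)"] by (simp add: A_def C_def N_def)
          moreover have "ing G x y" using cyc[OF zc ordz, of n c] xz yz AC gcd_dvd1[of n "int (ord z)"] by (simp add: A_def C_def N_def)
          ultimately show False using notboth by blast
        qed
        have E: "((E dvd A \<or> A dvd E) \<longleftrightarrow> (E dvd C \<or> C dvd E))" if "E dvd N" "E > 0" for E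
        proof -
          have ef: "z [^] E \<in> fin_ord G" using zf by (rule ing_fin) (auto simp: ing_def)
          have "(ing G (z [^] E) x \<or> ing G x (z [^] E)) \<longleftrightarrow> (ing G (z [^] E) y \<or> ing G y (z [^] E))"
            using Eq[OF ef] .
          then show ?thesis using CI[of E n] CI[of E c] xz yz gE[OF that]
            by (auto simp: A_def C_def)
        qed
        have "A dvd B \<or> B dvd A" using core[OF pos dv neAC cmpAC E] by blast
        then show ?thesis using CI[of m n] xz wz by (auto simp: A_def B_def)
      qed
    qed
    show "pow_adj G x w" using pow_adj_iff[OF wf xf] ne goal by blast
  qed
  show ?thesis unfolding pow_cnbhd_def epow_cnbhd_def using main by blast
qed


theorem mainTheorem1:
  fixes G :: "('a, 'b) monoid_scheme" and x :: 'a
  assumes "group G"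
    and "card (fin_cen G) = 1"
    and "x \<in> fin_ord G"
    and "equiv_class G x \<noteq> approx_class G x"
  shows "pow_cnbhd G x = epow_cnbhd G x"
  using group.main_lemma[OF assms(1) TrueI assms(2-4)] .

end
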